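(* Let $(\mathcal{F},\langle\cdot,\cdot\rangle_\Xi)$ be a real inner product space (e.g. a finite-dimensional space of functions on $\Xi$) with norm $\|\cdot\|_\Xi$. Let $a,f\in\mathcal{F}$ and $\delta\ge 0$ with $\|f-a\|_\Xi\le\delta$, and let $\mathcal{S}(a,\delta)=\{u\in\mathcal{F}:\|u-a\|_\Xi\le\delta\}$. Let $g\in\mathcal{F}$ and let $h$ be the metric projection of $g$ onto $\mathcal{S}(a,\delta)$, i.e. $h\in\arg\min_{u\in\mathcal{S}(a,\delta)}\|u-g\|_\Xi$. Then $\|f-h\|_\Xi\le\|f-g\|_\Xi$. Moreover, if $g\notin\mathcal{S}(a,\delta)$, then $\|f-h\|_\Xi<\|f-g\|_\Xi$ and, with $\Delta:=\|g-h\|_\Xi$, $$\Delta\sqrt{\frac{\Delta}{\delta+\Delta}}\;\le\;\|f-g\|_\Xi-\|f-h\|_\Xi\;\le\;\Delta.$$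
   Context: Here $f$ is the (unknown) target function, $a$ an anchor function with certified tolerance $\delta$, and $g$ an arbitrary approximation of $f$. *)

theory Defs
  imports "HOL-Analysis.Analysis"
begin

definition tolerance_ball :: "'a::real_inner \<Rightarrow> real \<Rightarrow> 'a set" where
  "tolerance_ball a \<delta> = {u. norm (u - a) \<le> \<delta>}"

definition is_metric_projection :: "'a::real_inner \<Rightarrow> 'a set \<Rightarrow> 'a \<Rightarrow> bool" where
  "is_metric_projection g S h \<longleftrightarrow> h \<in> S \<and> (\<forall>u\<in>S. norm (h - g) \<le> norm (u - g))"

end

theory Submission
  imports Defs
begin

lemma scalar_bound:
  fixes A B D d t :: real
  assumes D: "D > 0" and d: "d \<ge> 0" and t: "t \<ge> 0" and B: "B \<ge> 0" and A: "A \<ge> 0"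
    and AB: "A^2 = B^2 + D*(D+t)" and Bt: "B^2 \<le> d*t"
  shows "D * sqrt (D/(d+D)) \<le> A - B"
proof -
  define c where "c = d + D"
  have c: "c > 0" using D d c_def by simp
  define x where "x = D*d/c"
  have x: "x \<ge> 0" using D d c by (simp add: x_def)
  define m where "m = D * sqrt (D/c)"
  have m0: "m \<ge> 0" using D c by (simp add: m_def)
  have mm: "m^2 = D^2 * (D/c)" using D c by (simp add: m_def power_mult_distrib)
  also have "\<dots> = D^2 - D*x" using c by (simp add: x_def c_def field_simps power2_eq_square)
  finally have m2: "m^2 = D^2 - D*x" .
  have L: "2*B*m \<le> D*(x+t)"
  proof (rule power2_le_imp_le)
    have "(2*B*m)^2 = 4*B^2*m^2" by (simp add: power_mult_distrib)
    also have "\<dots> \<le> 4*(d*t)*m^2" using Bt by (simp add: mult_right_mono)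
    also have "4*(d*t)*m^2 = D^2*(4*t*x)"
      using c mm by (simp add: x_def field_simps power2_eq_square)
    also have "\<dots> \<le> D^2*(x+t)^2"
    proof (rule mult_left_mono)
      have "(x-t)^2 \<ge> 0" by simp
      then show "4*t*x \<le> (x+t)^2" by (simp add: power2_eq_square algebra_simps)
    qed simp
    also have "\<dots> = (D*(x+t))^2" by (simp add: power_mult_distrib)
    finally show "(2*B*m)^2 \<le> (D*(x+t))^2" .
    show "0 \<le> D*(x+t)" using D x t by simp
  qed
  have "(B+m)^2 \<le> A^2"
    using L AB m2 by (simp add: power2_eq_square algebra_simps)
  then have "B + m \<le> A" using A by (rule power2_le_imp_le)
  then show ?thesis by (simp add: m_def c_def)
qed
lemma nd: "(norm (v - w))^2 = (norm v)^2 - 2*(v \<bullet> w) + (norm (w::'a::real_inner))^2"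
  using dot_norm_neg[of v w] by simp

lemma nds: "(norm (v - c *\<^sub>R w))^2 = (norm v)^2 - 2*c*(v \<bullet> w) + c^2 * (norm (w::'a::real_inner))^2"
  by (simp add: nd power_mult_distrib)

theorem mainTheorem3:
  fixes a f g h :: "'a::real_inner" and \<delta> :: real
  assumes d0: "\<delta> \<ge> 0"
    and fa: "norm (f - a) \<le> \<delta>"
    and pr: "is_metric_projection g (tolerance_ball a \<delta>) h"
  shows "norm (f - h) \<le> norm (f - g) \<and>
         (g \<notin> tolerance_ball a \<delta> \<longrightarrow>
           norm (f - h) < norm (f - g) \<and>
           (let \<Delta> = norm (g - h) in
              \<Delta> * sqrt (\<Delta> / (\<delta> + \<Delta>)) \<le> norm (f - g) - norm (f - h) \<and>
              norm (f - g) - norm (f - h) \<le> \<Delta>))"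
proof (cases "g \<in> tolerance_ball a \<delta>")
  case True
  then have "norm (h - g) \<le> norm (g - g)" using pr unfolding is_metric_projection_def by blast
  then have "h = g" by simp
  then show ?thesis using True by simp
next
  case False
  have hS: "norm (h - a) \<le> \<delta>" and hmin: "\<And>u. norm (u - a) \<le> \<delta> \<Longrightarrow> norm (h - g) \<le> norm (u - g)"
    using pr unfolding is_metric_projection_def tolerance_ball_def by auto
  define r where "r = norm (g - a)"
  have rd: "r > \<delta>" using False unfolding tolerance_ball_def r_def by simp
  have r0: "r > 0" using rd d0 by simp
  define y where "y = g - a"
  define x where "x = h - a"
  define z where "z = f - a"
  define k where "k = \<delta> / r"
  have k0: "0 \<le> k" "k < 1" using d0 rd r0 by (auto simp: k_def)
  have ny: "norm y = r" by (simp add: y_def r_def)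
  have "norm ((a + k *\<^sub>R y) - a) = \<delta>" using ny k0 r0 d0 by (simp add: k_def)
  then have "norm (h - g) \<le> norm ((a + k *\<^sub>R y) - g)" by (intro hmin) simp
  also have "(a + k *\<^sub>R y) - g = (k - 1) *\<^sub>R y" by (simp add: y_def algebra_simps)
  also have "norm ((k - 1) *\<^sub>R y) = r - \<delta>" using ny k0 r0 by (simp add: k_def field_simps)
  finally have D1: "norm (h - g) \<le> r - \<delta>" .
  have "norm (g - a) \<le> norm (g - h) + norm (h - a)"
    using norm_triangle_ineq[of "g - h" "h - a"] by simp
  then have D2: "r - \<delta> \<le> norm (g - h)" using hS r_def by simp
  have Dr: "norm (g - h) = r - \<delta>" using D1 D2 by (simp add: norm_minus_commute)
  have nyx: "norm (y - x) = r - \<delta>" using Dr by (simp add: x_def y_def)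
  have nx: "norm x \<le> \<delta>" using hS by (simp add: x_def)
  have e1: "(r - \<delta>)^2 = r^2 - 2 * (y \<bullet> x) + (norm x)^2"
    using nyx ny nd[of y x] by simp
  have "r * (norm (x - k *\<^sub>R y))^2 = r * ((norm x)^2 - 2*k*(x \<bullet> y) + k^2 * r^2)"
    using nds[of x k y] ny by simp
  also have "\<dots> = (r - \<delta>) * ((norm x)^2 - \<delta>^2)"
  proof -
    have xy: "x \<bullet> y = ((norm x)^2 + 2*r*\<delta> - \<delta>^2)/2"
      using e1 by (simp add: inner_commute power2_eq_square algebra_simps)
    show ?thesis using r0 unfolding xy k_def by (simp add: field_simps power2_eq_square)
  qed
  also have "\<dots> \<le> 0"
  proof -
    have "(norm x)^2 \<le> \<delta>^2" using nx by (simp add: power_mono)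
    then show ?thesis using rd by (simp add: mult_nonneg_nonpos)
  qed
  finally have "norm (x - k *\<^sub>R y) = 0" using r0
    by (metis mult_le_0_iff norm_ge_zero not_le order_antisym zero_eq_power2 zero_le_power2)
  then have hx: "h = a + k *\<^sub>R y" by (simp add: x_def algebra_simps)
  define A where "A = norm (f - g)"
  define B where "B = norm (f - h)"
  define \<Delta> where "\<Delta> = norm (g - h)"
  define p where "p = (z \<bullet> y) / r"
  define t where "t = 2 * (\<delta> - p)"
  have Dd: "\<Delta> = r - \<delta>" "\<Delta> > 0" using Dr rd by (auto simp: \<Delta>_def)
  have nz: "norm z \<le> \<delta>" using fa by (simp add: z_def)
  have "z \<bullet> y \<le> norm z * norm y" by (rule norm_cauchy_schwarz)
  also have "\<dots> \<le> \<delta> * r" using nz ny r0 by (simp add: mult_right_mono)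
  finally have "p \<le> \<delta>" using r0 by (simp add: p_def pos_divide_le_eq)
  then have t0: "t \<ge> 0" by (simp add: t_def)
  have A2: "A^2 = (norm z)^2 - 2 * (z \<bullet> y) + r^2"
    using nd[of z y] ny by (simp add: A_def z_def y_def)
  have B2: "B^2 = (norm z)^2 - 2 * k * (z \<bullet> y) + \<delta>^2"
    proof -
    have "f - h = z - k *\<^sub>R y" using hx by (simp add: z_def)
    moreover have "k^2 * r^2 = \<delta>^2" using r0 by (simp add: k_def field_simps)
    ultimately show ?thesis using nds[of z k y] ny by (simp add: B_def)
  qed
  have zy: "z \<bullet> y = p * r" using r0 by (simp add: p_def)
  have nz2: "(norm z)^2 \<le> \<delta>^2" using nz by (simp add: power_mono)
  have AB: "A^2 = B^2 + \<Delta> * (\<Delta> + t)"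
  proof -
    have rr: "r = \<Delta> + \<delta>" using Dd(1) by simp
    have a2: "A^2 = (norm z)^2 - 2*p*(\<Delta> + \<delta>) + (\<Delta> + \<delta>)^2" using A2 zy rr by simp
    have b2: "B^2 = (norm z)^2 - 2*p*\<delta> + \<delta>^2" using B2 zy r0 by (simp add: k_def)
    show ?thesis unfolding a2 b2 t_def by (simp add: power2_eq_square algebra_simps)
  qed
  have Bt: "B^2 \<le> \<delta> * t"
    using B2 zy r0 nz2 by (simp add: t_def k_def field_simps power2_eq_square)
  have A0: "A \<ge> 0" "B \<ge> 0" by (auto simp: A_def B_def)
  have "B^2 < A^2" using AB Dd t0 by (simp add: add_pos_nonneg)
  then have lt: "B < A" using A0 by (simp add: power_less_imp_less_base)
  have up: "A - B \<le> \<Delta>"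
    using norm_triangle_ineq[of "f - h" "h - g"] by (simp add: A_def B_def \<Delta>_def norm_minus_commute)
  have lo: "\<Delta> * sqrt (\<Delta> / (\<delta> + \<Delta>)) \<le> A - B"
    by (rule scalar_bound[OF Dd(2) d0 t0 A0(2) A0(1) AB Bt])
  show ?thesis using lt up lo False by (simp add: A_def B_def \<Delta>_def Let_def)
qed
end
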